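(* Let $\Delta\ge\omega\ge u+1\ge2$ and $p\ge1$ be integers, let $H$ be a graph containing $K_u$ as a subgraph, and let $L=\mathrm{T}_\omega\big(\Delta+u\lfloor\frac{\Delta}{\omega-u}\rfloor\big)$. Then \[\mathcal{N}\Big(H,\Big\lfloor\frac{p}{k^u(L)}\Big\rfloor L\Big)\le\mathrm{ex}_u(p,H,\{K_u\vee I_{\Delta+1},K_{\omega+1}\}).\]
   Context: All graphs are finite and simple. $\mathcal{N}(H,G)$ is the number of (not necessarily induced) subgraphs of $G$ isomorphic to $H$; $k^u(G)=\mathcal{N}(K_u,G)$. $aL$ is the disjoint union of $a$ copies of $L$. $\mathrm{T}_r(n)$ is the Turán graph (complete $r$-partite on $n$ vertices with part sizes $\lfloor n/r\rfloor$ or $\lceil n/r\rceil$). $K_u\vee I_{\Delta+1}$ is the complete split graph: a $u$-clique, an independent set of $\Delta+1$ vertices, and all edges between them. $\mathrm{ex}_u(p,H,\mathcal{F})\in[0,\infty]$ is the supremum of $\mathcal{N}(H,G)$ over all graphs $G$ with $k^u(G)=p$ having no subgraph isomorphic to a member of $\mathcal{F}$. *)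

theory Defs
  imports Main "HOL-Library.Extended_Nat"
begin

type_synonym 'a graph = "'a set \<times> 'a set set"

definition verts :: "'a graph \<Rightarrow> 'a set" where "verts G = fst G"
definition edges :: "'a graph \<Rightarrow> 'a set set" where "edges G = snd G"

definition wf_graph :: "'a graph \<Rightarrow> bool" where
  "wf_graph G \<longleftrightarrow> finite (verts G) \<and>
     (\<forall>e\<in>edges G. \<exists>x y. x \<noteq> y \<and> e = {x, y} \<and> x \<in> verts G \<and> y \<in> verts G)"

definition subgraph :: "'a graph \<Rightarrow> 'a graph \<Rightarrow> bool" where
  "subgraph S G \<longleftrightarrow> wf_graph S \<and> verts S \<subseteq> verts G \<and> edges S \<subseteq> edges G"

definition iso :: "'a graph \<Rightarrow> 'b graph \<Rightarrow> bool" where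
  "iso G H \<longleftrightarrow> (\<exists>f. bij_betw f (verts G) (verts H) \<and>
     (\<forall>x\<in>verts G. \<forall>y\<in>verts G. {x, y} \<in> edges G \<longleftrightarrow> {f x, f y} \<in> edges H))"

definition count_sub :: "'b graph \<Rightarrow> 'a graph \<Rightarrow> nat" where
  "count_sub H G = card {S. subgraph S G \<and> iso S H}"

definition complete_graph :: "nat \<Rightarrow> nat graph" where
  "complete_graph n = ({0..<n}, {{i, j} | i j. i < n \<and> j < n \<and> i \<noteq> j})"

definition kcount :: "nat \<Rightarrow> 'a graph \<Rightarrow> nat" where
  "kcount u G = count_sub (complete_graph u) G"

text \<open>Turan graph T_r(n): vertex i lies in part (i mod r); parts have sizes floor/ceil of n/r.\<close>
definition turan_graph :: "nat \<Rightarrow> nat \<Rightarrow> nat graph" where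
  "turan_graph r n = ({0..<n}, {{i, j} | i j. i < n \<and> j < n \<and> i mod r \<noteq> j mod r})"

text \<open>Complete split graph K_u \<or> I_(d+1): vertices 0..<u form the clique,
  vertices u..<u+d+1 the independent set.\<close>
definition split_graph :: "nat \<Rightarrow> nat \<Rightarrow> nat graph" where
  "split_graph u d = ({0..<u + d + 1},
     {{i, j} | i j. i < u + d + 1 \<and> j < u + d + 1 \<and> i \<noteq> j \<and> (i < u \<or> j < u)})"

definition copies :: "nat \<Rightarrow> 'a graph \<Rightarrow> (nat \<times> 'a) graph" where
  "copies a L = ({0..<a} \<times> verts L,
     {{(k, x), (k, y)} | k x y. k < a \<and> {x, y} \<in> edges L})"

text \<open>Every finite graph is isomorphic to
  one on natural-number vertices, so ranging over nat graphs loses nothing.\<close>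
definition ex_u :: "nat \<Rightarrow> nat \<Rightarrow> 'b graph \<Rightarrow> 'c graph set \<Rightarrow> enat" where
  "ex_u u p H F = Sup {enat (count_sub H G) | G :: nat graph.
      wf_graph G \<and> kcount u G = p \<and> (\<forall>F0\<in>F. count_sub F0 G = 0)}"

end

theory Submission
  imports Defs "HOL-Library.Nat_Bijection"
begin


definition gmap :: "('a \<Rightarrow> 'b) \<Rightarrow> 'a graph \<Rightarrow> 'b graph" where
  "gmap f G = (f ` verts G, (\<lambda>e. f ` e) ` edges G)"

lemma verts_gmap[simp]: "verts (gmap f G) = f ` verts G" by (simp add: gmap_def verts_def)
lemma edges_gmap[simp]: "edges (gmap f G) = (\<lambda>e. f ` e) ` edges G" by (simp add: gmap_def edges_def)
lemma verts_pair[simp]: "verts (V,E) = V" by (simp add: verts_def)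
lemma edges_pair[simp]: "edges (V,E) = E" by (simp add: edges_def)
lemma graph_eqI: "verts A = verts B \<Longrightarrow> edges A = edges B \<Longrightarrow> A = B"
  by (simp add: verts_def edges_def prod_eq_iff)

lemma wf_fin: "wf_graph G \<Longrightarrow> finite (verts G)"
  unfolding wf_graph_def by (rule conjunct1)

lemma wf_edge: "wf_graph G \<Longrightarrow> e \<in> edges G \<Longrightarrow> \<exists>x y. x \<noteq> y \<and> e = {x, y} \<and> x \<in> verts G \<and> y \<in> verts G"
  unfolding wf_graph_def by (elim conjE) (rule bspec)

lemma wf_edge_sub: "wf_graph G \<Longrightarrow> e \<in> edges G \<Longrightarrow> e \<subseteq> verts G"
  by (drule (1) wf_edge) auto

lemma wf_edges_finite: "wf_graph G \<Longrightarrow> finite (edges G)"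
proof -
  assume w: "wf_graph G"
  have 1: "edges G \<subseteq> Pow (verts G)" using wf_edge_sub[OF w] by blast
  have 2: "finite (Pow (verts G))" using wf_fin[OF w] by simp
  show ?thesis by (rule finite_subset[OF 1 2])
qed

lemma finite_subgraphs: "wf_graph G \<Longrightarrow> finite {S. subgraph S G}"
proof -
  assume w: "wf_graph G"
  have 1: "{S. subgraph S G} \<subseteq> Pow (verts G) \<times> Pow (edges G)"
  proof
    fix S assume "S \<in> {S. subgraph S G}"
    then have "fst S \<subseteq> fst G" "snd S \<subseteq> snd G" by (simp_all add: subgraph_def verts_def edges_def)
    then show "S \<in> Pow (verts G) \<times> Pow (edges G)" by (simp add: verts_def edges_def mem_Times_iff)
  qed
  have 2: "finite (Pow (verts G) \<times> Pow (edges G))"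
    using wf_fin[OF w] wf_edges_finite[OF w] by simp
  show ?thesis by (rule finite_subset[OF 1 2])
qed

lemma finite_cset: "wf_graph G \<Longrightarrow> finite {S. subgraph S G \<and> iso S F}"
proof -
  assume "wf_graph G"
  then have 1: "finite {S. subgraph S G}" by (rule finite_subgraphs)
  have 2: "{S. subgraph S G \<and> iso S F} \<subseteq> {S. subgraph S G}" by blast
  show ?thesis by (rule finite_subset[OF 2 1])
qed

lemma wf_gmap:
  assumes i: "inj_on f (verts G)" and w: "wf_graph G"
  shows "wf_graph (gmap f G)"
proof -
  have fv: "finite (verts G)" using wf_fin[OF w] .
  have "\<exists>x y. x \<noteq> y \<and> e' = {x, y} \<and> x \<in> f ` verts G \<and> y \<in> f ` verts G"
    if e': "e' \<in> (\<lambda>e. f ` e) ` edges G" for e'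
  proof -
    obtain e where e: "e \<in> edges G" "e' = f ` e" using e' by blast
    obtain x y where xy: "x \<noteq> y" "e = {x, y}" "x \<in> verts G" "y \<in> verts G"
      using wf_edge[OF w e(1)] by blast
    have "f x \<noteq> f y" using inj_on_contraD[OF i xy(1) xy(3) xy(4)] .
    moreover have "e' = {f x, f y}" using xy(2) e(2) by simp
    ultimately show ?thesis using xy(3,4) by blast
  qed
  then have *: "\<forall>e'\<in>(\<lambda>e. f ` e) ` edges G. \<exists>x y. x \<noteq> y \<and> e' = {x, y} \<and> x \<in> f ` verts G \<and> y \<in> f ` verts G"
    by blast
  have "finite (f ` verts G)" using fv by (rule finite_imageI)
  with * show ?thesis unfolding wf_graph_def verts_gmap edges_gmap by (intro conjI) assumption+
qed

lemma iso_refl: "iso G G"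
  unfolding iso_def by (rule exI[of _ id]) (simp add: bij_betw_id)

lemma iso_trans: "iso A B \<Longrightarrow> iso B C \<Longrightarrow> iso A C"
  unfolding iso_def
proof (elim exE conjE)
  fix f g assume f: "bij_betw f (verts A) (verts B)" and fe: "\<forall>x\<in>verts A. \<forall>y\<in>verts A. {x, y} \<in> edges A \<longleftrightarrow> {f x, f y} \<in> edges B"
    and g: "bij_betw g (verts B) (verts C)" and ge: "\<forall>x\<in>verts B. \<forall>y\<in>verts B. {x, y} \<in> edges B \<longleftrightarrow> {g x, g y} \<in> edges C"
  show "\<exists>h. bij_betw h (verts A) (verts C) \<and> (\<forall>x\<in>verts A. \<forall>y\<in>verts A. {x, y} \<in> edges A \<longleftrightarrow> {h x, h y} \<in> edges C)"
  proof (rule exI[of _ "g \<circ> f"], intro conjI ballI)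
    show "bij_betw (g \<circ> f) (verts A) (verts C)" using bij_betw_trans[OF f g] .
    fix x y assume x: "x \<in> verts A" and y: "y \<in> verts A"
    have "f x \<in> verts B" "f y \<in> verts B" using bij_betwE[OF f] x y by blast+
    then show "{x, y} \<in> edges A \<longleftrightarrow> {(g \<circ> f) x, (g \<circ> f) y} \<in> edges C"
      using fe ge x y by simp
  qed
qed

lemma iso_sym: "iso A B \<Longrightarrow> iso B A"
  unfolding iso_def
proof (elim exE conjE)
  fix f assume f: "bij_betw f (verts A) (verts B)" and fe: "\<forall>x\<in>verts A. \<forall>y\<in>verts A. {x, y} \<in> edges A \<longleftrightarrow> {f x, f y} \<in> edges B"
  let ?h = "inv_into (verts A) f"
  have h: "bij_betw ?h (verts B) (verts A)" using f by (rule bij_betw_inv_into)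
  have "\<forall>x\<in>verts B. \<forall>y\<in>verts B. {x, y} \<in> edges B \<longleftrightarrow> {?h x, ?h y} \<in> edges A"
  proof (intro ballI)
    fix x y assume x: "x \<in> verts B" and y: "y \<in> verts B"
    have "f (?h x) = x" "f (?h y) = y" using f x y by (auto simp: bij_betw_def f_inv_into_f)
    moreover have hx: "?h x \<in> verts A" "?h y \<in> verts A" using bij_betwE[OF h] x y by blast+
    moreover have "{?h x, ?h y} \<in> edges A \<longleftrightarrow> {f (?h x), f (?h y)} \<in> edges B" using fe hx by blast
    ultimately show "{x, y} \<in> edges B \<longleftrightarrow> {?h x, ?h y} \<in> edges A" by simp
  qed
  with h show "\<exists>h. bij_betw h (verts B) (verts A) \<and> (\<forall>x\<in>verts B. \<forall>y\<in>verts B. {x, y} \<in> edges B \<longleftrightarrow> {h x, h y} \<in> edges A)"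
    by blast
qed

lemma iso_gmap: "inj_on f (verts G) \<Longrightarrow> wf_graph G \<Longrightarrow> iso G (gmap f G)"
  unfolding iso_def
proof (rule exI[of _ f], intro conjI ballI)
  assume i: "inj_on f (verts G)" and w: "wf_graph G"
  show "bij_betw f (verts G) (verts (gmap f G))" using i by (simp add: bij_betw_def)
  fix x y assume x: "x \<in> verts G" and y: "y \<in> verts G"
  show "{x, y} \<in> edges G \<longleftrightarrow> {f x, f y} \<in> edges (gmap f G)"
  proof
    assume "{x, y} \<in> edges G"
    then have "f ` {x,y} \<in> (\<lambda>e. f ` e) ` edges G" by (rule imageI)
    then show "{f x, f y} \<in> edges (gmap f G)" by simp
  next
    assume "{f x, f y} \<in> edges (gmap f G)"
    then obtain e where e: "e \<in> edges G" "{f x, f y} = f ` e" by auto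
    have fe: "f ` {x,y} = f ` e" using e(2) by simp
    have es: "e \<subseteq> verts G" using wf_edge_sub[OF w e(1)] .
    have xs: "{x,y} \<subseteq> verts G" using x y by simp
    have "{x,y} = e" using inj_on_image_eq_iff[OF i xs es] fe by simp
    with e show "{x, y} \<in> edges G" by simp
  qed
qed

lemma count_le_gmap:
  assumes i: "inj_on f (verts G)" and w: "wf_graph G"
  shows "count_sub F G \<le> count_sub F (gmap f G)"
proof -
  have 1: "finite {S. subgraph S (gmap f G) \<and> iso S F}" using finite_cset wf_gmap[OF i w] by blast
  have 2: "gmap f ` {S. subgraph S G \<and> iso S F} \<subseteq> {S. subgraph S (gmap f G) \<and> iso S F}"
  proof
    fix T assume "T \<in> gmap f ` {S. subgraph S G \<and> iso S F}"
    then obtain S where T: "T = gmap f S" and s: "subgraph S G" and iso: "iso S F" by blast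
    have iS: "inj_on f (verts S)" using s i by (auto simp: subgraph_def intro: inj_on_subset)
    have wS: "wf_graph S" using s by (simp add: subgraph_def)
    have "subgraph (gmap f S) (gmap f G)" using s wf_gmap[OF iS wS] by (auto simp: subgraph_def)
    moreover have "iso (gmap f S) F" using iso_trans[OF iso_sym[OF iso_gmap[OF iS wS]] iso] .
    ultimately show "T \<in> {S. subgraph S (gmap f G) \<and> iso S F}" using T by blast
  qed
  have 3: "inj_on (gmap f) {S. subgraph S G \<and> iso S F}"
  proof (rule inj_onI)
    fix S S' assume "S \<in> {S. subgraph S G \<and> iso S F}" "S' \<in> {S. subgraph S G \<and> iso S F}"
      and eq: "gmap f S = gmap f S'"
    then have s: "subgraph S G" "subgraph S' G" by auto
    have v: "verts S = verts S'"
      using eq s inj_on_image_eq_iff[OF i] verts_gmap by (metis subgraph_def)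
    have p1: "edges S \<subseteq> Pow (verts G)" "edges S' \<subseteq> Pow (verts G)"
      using s wf_edge_sub by (fastforce simp: subgraph_def)+
    have "(\<lambda>e. f ` e) ` edges S = (\<lambda>e. f ` e) ` edges S'" using eq edges_gmap by metis
    hence "edges S = edges S'" using inj_on_image_eq_iff[OF inj_on_image_Pow[OF i] p1] by blast
    with v show "S = S'" by (rule graph_eqI)
  qed
  show ?thesis unfolding count_sub_def by (rule card_inj_on_le[OF 3 2 1])
qed

lemma gmap_inv:
  assumes i: "inj_on f (verts G)" and w: "wf_graph G"
  shows "gmap (inv_into (verts G) f) (gmap f G) = G"
proof (rule graph_eqI)
  show "verts (gmap (inv_into (verts G) f) (gmap f G)) = verts G"
    using inv_into_image_cancel[OF i subset_refl] by simp
  have *: "inv_into (verts G) f ` f ` e = e" if "e \<in> edges G" for e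
    using inv_into_image_cancel[OF i wf_edge_sub[OF w that]] .
  have "(\<lambda>e. inv_into (verts G) f ` e) ` (\<lambda>e. f ` e) ` edges G = (\<lambda>e. inv_into (verts G) f ` f ` e) ` edges G"
    by (simp add: image_image)
  also have "\<dots> = edges G" using * by simp
  finally show "edges (gmap (inv_into (verts G) f) (gmap f G)) = edges G" by simp
qed

lemma count_gmap:
  assumes i: "inj_on f (verts G)" and w: "wf_graph G"
  shows "count_sub F (gmap f G) = count_sub F G"
proof (rule antisym)
  have i2: "inj_on (inv_into (verts G) f) (verts (gmap f G))" by (simp add: inj_on_inv_into)
  have "count_sub F (gmap f G) \<le> count_sub F (gmap (inv_into (verts G) f) (gmap f G))"
    by (rule count_le_gmap[OF i2 wf_gmap[OF i w]])
  then show "count_sub F (gmap f G) \<le> count_sub F G" unfolding gmap_inv[OF i w] .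
  show "count_sub F G \<le> count_sub F (gmap f G)" by (rule count_le_gmap[OF i w])
qed

lemma subgraph_trans: "subgraph S A \<Longrightarrow> verts A \<subseteq> verts B \<Longrightarrow> edges A \<subseteq> edges B \<Longrightarrow> subgraph S B"
  unfolding subgraph_def by (elim conjE) (intro conjI; assumption?; erule subset_trans; assumption)

lemma count_mono:
  assumes "wf_graph B" "verts A \<subseteq> verts B" "edges A \<subseteq> edges B"
  shows "count_sub F A \<le> count_sub F B"
proof -
  have "{S. subgraph S A \<and> iso S F} \<subseteq> {S. subgraph S B \<and> iso S F}"
    using subgraph_trans[OF _ assms(2,3)] by blast
  then show ?thesis unfolding count_sub_def by (rule card_mono[OF finite_cset[OF assms(1)]])
qed

definition has_univ :: "'a graph \<Rightarrow> bool" where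
  "has_univ G \<longleftrightarrow> (\<exists>c\<in>verts G. \<forall>v\<in>verts G. v \<noteq> c \<longrightarrow> {c, v} \<in> edges G)"

lemma iso_univ: assumes "iso S F" "has_univ F" shows "has_univ S"
proof -
  obtain f where f: "bij_betw f (verts S) (verts F)" and fe: "\<forall>x\<in>verts S. \<forall>y\<in>verts S. {x, y} \<in> edges S \<longleftrightarrow> {f x, f y} \<in> edges F"
    using assms(1) unfolding iso_def by (elim exE conjE)
  obtain c where c: "c \<in> verts F" "\<forall>v\<in>verts F. v \<noteq> c \<longrightarrow> {c, v} \<in> edges F"
    using assms(2) unfolding has_univ_def by (elim bexE)
  let ?c = "inv_into (verts S) f c"
  have c1: "?c \<in> verts S" "f ?c = c" using f c by (auto simp: bij_betw_def inv_into_into f_inv_into_f)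
  have inj: "inj_on f (verts S)" using f by (simp add: bij_betw_def)
  have "\<forall>v\<in>verts S. v \<noteq> ?c \<longrightarrow> {?c, v} \<in> edges S"
  proof (intro ballI impI)
    fix v assume v: "v \<in> verts S" "v \<noteq> ?c"
    have "f v \<noteq> f ?c" using inj_on_contraD[OF inj v(2)[symmetric] c1(1) v(1)] by simp
    then have "f v \<noteq> c" using c1 by simp
    moreover have "f v \<in> verts F" using bij_betwE[OF f] v(1) by blast
    ultimately have "{f ?c, f v} \<in> edges F" using c(2) c1(2) by simp
    then show "{?c, v} \<in> edges S" using fe c1(1) v(1) by blast
  qed
  with c1 show ?thesis unfolding has_univ_def by (intro bexI)
qed

definition gunion :: "'i set \<Rightarrow> ('i \<Rightarrow> 'a graph) \<Rightarrow> 'a graph" where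
  "gunion I G = (\<Union>k\<in>I. verts (G k), \<Union>k\<in>I. edges (G k))"

lemma wf_gunion: "finite I \<Longrightarrow> \<forall>k\<in>I. wf_graph (G k) \<Longrightarrow> wf_graph (gunion I G)"
proof -
  assume fI: "finite I" and w: "\<forall>k\<in>I. wf_graph (G k)"
  have "finite (\<Union>k\<in>I. verts (G k))" 
  proof (rule finite_UN_I[OF fI])
    fix k assume "k \<in> I" then show "finite (verts (G k))" using w wf_fin by blast
  qed
  moreover have "\<forall>e\<in>(\<Union>k\<in>I. edges (G k)). \<exists>x y. x \<noteq> y \<and> e = {x, y} \<and> x \<in> (\<Union>k\<in>I. verts (G k)) \<and> y \<in> (\<Union>k\<in>I. verts (G k))"
  proof
    fix e assume "e \<in> (\<Union>k\<in>I. edges (G k))"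
    then obtain k where k: "k \<in> I" "e \<in> edges (G k)" by blast
    then have wk: "wf_graph (G k)" using w by simp
    obtain x y where "x \<noteq> y" "e = {x, y}" "x \<in> verts (G k)" "y \<in> verts (G k)"
      using wf_edge[OF wk k(2)] by (elim exE conjE)
    then show "\<exists>x y. x \<noteq> y \<and> e = {x, y} \<and> x \<in> (\<Union>k\<in>I. verts (G k)) \<and> y \<in> (\<Union>k\<in>I. verts (G k))"
      using k by blast
  qed
  ultimately show ?thesis unfolding wf_graph_def gunion_def by simp
qed

lemma subgraphD: assumes "subgraph S G" shows "wf_graph S" "verts S \<subseteq> verts G" "edges S \<subseteq> edges G"
  using assms unfolding subgraph_def by simp_all

lemma subgraphI: "wf_graph S \<Longrightarrow> verts S \<subseteq> verts G \<Longrightarrow> edges S \<subseteq> edges G \<Longrightarrow> subgraph S G"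
  unfolding subgraph_def by (intro conjI)

lemma univD: assumes "has_univ S" obtains c where "c \<in> verts S" "\<forall>v\<in>verts S. v \<noteq> c \<longrightarrow> {c, v} \<in> edges S"
  using assms unfolding has_univ_def by (elim bexE)

lemma count_union:
  assumes fI: "finite I" and w: "\<forall>k\<in>I. wf_graph (G k)"
    and d: "\<forall>k\<in>I. \<forall>j\<in>I. k \<noteq> j \<longrightarrow> verts (G k) \<inter> verts (G j) = {}"
    and u: "has_univ F"
  shows "count_sub F (gunion I G) = (\<Sum>k\<in>I. count_sub F (G k))"
proof -
  have dd: "j = k" if "j \<in> I" "k \<in> I" "x \<in> verts (G j)" "x \<in> verts (G k)" for j k x
  proof (rule ccontr)
    assume "j \<noteq> k" then have "verts (G j) \<inter> verts (G k) = {}" using d that(1,2) by blast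
    then show False using that(3,4) by blast
  qed
  have vu: "verts (gunion I G) = (\<Union>k\<in>I. verts (G k))" and eu: "edges (gunion I G) = (\<Union>k\<in>I. edges (G k))"
    by (simp_all add: gunion_def)
  have eq: "{S. subgraph S (gunion I G) \<and> iso S F} = (\<Union>k\<in>I. {S. subgraph S (G k) \<and> iso S F})"
  proof (rule set_eqI, rule iffI)
    fix S assume "S \<in> {S. subgraph S (gunion I G) \<and> iso S F}"
    then have s: "subgraph S (gunion I G)" and iso: "iso S F" by simp_all
    obtain c where c: "c \<in> verts S" "\<forall>v\<in>verts S. v \<noteq> c \<longrightarrow> {c, v} \<in> edges S"
      using univD[OF iso_univ[OF iso u]] by blast
    have sub: "verts S \<subseteq> (\<Union>k\<in>I. verts (G k))" "edges S \<subseteq> (\<Union>k\<in>I. edges (G k))" "wf_graph S"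
      using subgraphD[OF s] vu eu by simp_all
    obtain k where k: "k \<in> I" "c \<in> verts (G k)" using c(1) sub(1) by blast
    have vk: "verts S \<subseteq> verts (G k)"
    proof
      fix v assume v: "v \<in> verts S"
      show "v \<in> verts (G k)"
      proof (cases "v = c")
        case True then show ?thesis using k by simp
      next
        case False
        then have "{c, v} \<in> edges S" using c(2) v by blast
        then obtain j where j: "j \<in> I" "{c,v} \<in> edges (G j)" using sub(2) by blast
        have wj: "wf_graph (G j)" using w j(1) by blast
        have cv: "{c,v} \<subseteq> verts (G j)" using wf_edge_sub[OF wj j(2)] .
        then have "j = k" using dd[OF j(1) k(1) _ k(2)] by simp
        then show ?thesis using cv by simp
      qed
    qed
    have ek: "edges S \<subseteq> edges (G k)"
    proof
      fix e assume e: "e \<in> edges S"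
      obtain x y where xy: "e = {x,y}" "x \<in> verts S" using wf_edge[OF sub(3) e] by blast
      obtain j where j: "j \<in> I" "e \<in> edges (G j)" using sub(2) e by blast
      have wj: "wf_graph (G j)" using w j(1) by blast
      have "x \<in> verts (G j)" using wf_edge_sub[OF wj j(2)] xy(1) by simp
      moreover have "x \<in> verts (G k)" using vk xy(2) by blast
      ultimately have "j = k" using dd[OF j(1) k(1)] by simp
      then show "e \<in> edges (G k)" using j by simp
    qed
    have "subgraph S (G k)" using subgraphI[OF sub(3) vk ek] .
    then show "S \<in> (\<Union>k\<in>I. {S. subgraph S (G k) \<and> iso S F})" using k(1) iso by blast
  next
    fix S assume "S \<in> (\<Union>k\<in>I. {S. subgraph S (G k) \<and> iso S F})"
    then obtain k where k: "k \<in> I" "subgraph S (G k)" "iso S F" by blast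
    have "verts (G k) \<subseteq> verts (gunion I G)" "edges (G k) \<subseteq> edges (gunion I G)" using vu eu k(1) by blast+
    then have "subgraph S (gunion I G)" using subgraph_trans[OF k(2)] by blast
    then show "S \<in> {S. subgraph S (gunion I G) \<and> iso S F}" using k(3) by simp
  qed
  have "card (\<Union>k\<in>I. {S. subgraph S (G k) \<and> iso S F}) = (\<Sum>k\<in>I. card {S. subgraph S (G k) \<and> iso S F})"
  proof (rule card_UN_disjoint[OF fI])
    show "\<forall>i\<in>I. finite {S. subgraph S (G i) \<and> iso S F}" using w finite_cset by blast
    show "\<forall>i\<in>I. \<forall>j\<in>I. i \<noteq> j \<longrightarrow> {S. subgraph S (G i) \<and> iso S F} \<inter> {S. subgraph S (G j) \<and> iso S F} = {}"
    proof (intro ballI impI)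
      fix i j assume ij: "i \<in> I" "j \<in> I" "i \<noteq> j"
      show "{S. subgraph S (G i) \<and> iso S F} \<inter> {S. subgraph S (G j) \<and> iso S F} = {}"
      proof (rule ccontr)
        assume "\<not> ?thesis"
        then obtain S where S: "subgraph S (G i)" "subgraph S (G j)" "iso S F" by blast
        obtain c where c: "c \<in> verts S" using univD[OF iso_univ[OF S(3) u]] by blast
        have "c \<in> verts (G i)" "c \<in> verts (G j)" using subgraphD(2)[OF S(1)] subgraphD(2)[OF S(2)] c by blast+
        then have "i = j" using dd ij by blast
        then show False using ij(3) by simp
      qed
    qed
  qed
  then show ?thesis unfolding count_sub_def eq .
qed

lemma count_zero_card:
  assumes "finite (verts G)" "card (verts G) < card (verts F)"
  shows "count_sub F G = 0"
proof -
  have "{S. subgraph S G \<and> iso S F} = {}"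
  proof (rule equals0I)
    fix S assume "S \<in> {S. subgraph S G \<and> iso S F}"
    then have s: "subgraph S G" "iso S F" by simp_all
    obtain f where "bij_betw f (verts S) (verts F)" using s(2) unfolding iso_def by blast
    then have "card (verts S) = card (verts F)" by (rule bij_betw_same_card)
    moreover have "card (verts S) \<le> card (verts G)" using card_mono[OF assms(1) subgraphD(2)[OF s(1)]] .
    ultimately show False using assms(2) by simp
  qed
  then show ?thesis unfolding count_sub_def by (simp only: card.empty)
qed



lemma wf_intro:
  assumes "finite V" and "\<And>i j. P i j \<Longrightarrow> i \<noteq> j \<and> i \<in> V \<and> j \<in> V"
  shows "wf_graph (V, {{i, j} | i j. P i j})"
  unfolding wf_graph_def verts_pair edges_pair
proof (intro conjI ballI)
  show "finite V" by fact
  fix e assume "e \<in> {{i, j} | i j. P i j}"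
  then obtain i j where "e = {i,j}" "P i j" by blast
  then show "\<exists>x y. x \<noteq> y \<and> e = {x, y} \<and> x \<in> V \<and> y \<in> V" using assms(2) by blast
qed

lemma wf_turan: "wf_graph (turan_graph r n)"
  unfolding turan_graph_def by (rule wf_intro) auto

lemma wf_complete: "wf_graph (complete_graph n)"
  unfolding complete_graph_def by (rule wf_intro) auto

lemma verts_turan[simp]: "verts (turan_graph r n) = {0..<n}" by (simp add: turan_graph_def)
lemma verts_complete[simp]: "verts (complete_graph n) = {0..<n}" by (simp add: complete_graph_def)
lemma verts_split[simp]: "verts (split_graph u d) = {0..<u+d+1}" by (simp add: split_graph_def)

lemma turan_edge:
  assumes "{x,y} \<in> edges (turan_graph r n)"
  shows "x mod r \<noteq> y mod r"
proof -
  obtain i j where ij: "{x,y} = {i,j}" "i mod r \<noteq> j mod r"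
    using assms unfolding turan_graph_def edges_pair by blast
  then have "(x=i \<and> y=j) \<or> (x=j \<and> y=i)" by (simp add: doubleton_eq_iff)
  then show ?thesis using ij(2) by auto
qed

lemma complete_edge: "{x,y} \<in> edges (complete_graph n) \<longleftrightarrow> x < n \<and> y < n \<and> x \<noteq> y"
proof
  assume "{x,y} \<in> edges (complete_graph n)"
  then obtain i j where ij: "{x,y} = {i,j}" "i < n" "j < n" "i \<noteq> j"
    unfolding complete_graph_def edges_pair by blast
  then have "(x=i \<and> y=j) \<or> (x=j \<and> y=i)" by (simp add: doubleton_eq_iff)
  then show "x < n \<and> y < n \<and> x \<noteq> y" using ij by auto
next
  assume "x < n \<and> y < n \<and> x \<noteq> y"
  then show "{x,y} \<in> edges (complete_graph n)" unfolding complete_graph_def edges_pair by blast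
qed

lemma split_edge: "x < u + d + 1 \<Longrightarrow> y < u + d + 1 \<Longrightarrow> x \<noteq> y \<Longrightarrow> x < u \<or> y < u \<Longrightarrow>
  {x,y} \<in> edges (split_graph u d)"
  unfolding split_graph_def edges_pair by blast

lemma univ_complete: "m \<ge> 1 \<Longrightarrow> has_univ (complete_graph m)"
  unfolding has_univ_def
proof (rule bexI[of _ 0])
  assume "m \<ge> 1"
  then show "0 \<in> verts (complete_graph m)" by simp
  show "\<forall>v\<in>verts (complete_graph m). v \<noteq> 0 \<longrightarrow> {0, v} \<in> edges (complete_graph m)"
    using \<open>m \<ge> 1\<close> by (simp add: complete_edge)
qed

lemma univ_split: "u \<ge> 1 \<Longrightarrow> has_univ (split_graph u d)"
  unfolding has_univ_def
proof (rule bexI[of _ 0])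
  assume "u \<ge> 1"
  then show "0 \<in> verts (split_graph u d)" by simp
  show "\<forall>v\<in>verts (split_graph u d). v \<noteq> 0 \<longrightarrow> {0, v} \<in> edges (split_graph u d)"
    using \<open>u \<ge> 1\<close> by (auto intro: split_edge)
qed

lemma kcount_complete: "kcount u (complete_graph u) = 1"
proof -
  let ?K = "complete_graph u"
  have "{S. subgraph S ?K \<and> iso S ?K} = {?K}"
  proof (rule set_eqI, rule iffI)
    fix S assume "S \<in> {S. subgraph S ?K \<and> iso S ?K}"
    then have s: "subgraph S ?K" and iso: "iso S ?K" by simp_all
    obtain f where f: "bij_betw f (verts S) (verts ?K)" and fe: "\<forall>x\<in>verts S. \<forall>y\<in>verts S. {x, y} \<in> edges S \<longleftrightarrow> {f x, f y} \<in> edges ?K"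
      using iso unfolding iso_def by (elim exE conjE)
    have vs: "verts S \<subseteq> {0..<u}" using subgraphD(2)[OF s] by simp
    have "card (verts S) = card {0..<u}" using bij_betw_same_card[OF f] by simp
    then have v: "verts S = {0..<u}" using card_subset_eq[OF _ vs] by simp
    have inj: "inj_on f (verts S)" using f by (simp add: bij_betw_def)
    have "edges ?K \<subseteq> edges S"
    proof
      fix e assume "e \<in> edges ?K"
      then obtain i j where ij: "e = {i,j}" "i < u" "j < u" "i \<noteq> j"
        unfolding complete_graph_def edges_pair by blast
      have ijS: "i \<in> verts S" "j \<in> verts S" using v ij by auto
      have "f i \<noteq> f j" using inj_on_contraD[OF inj ij(4) ijS] .
      moreover have "f i < u" "f j < u" using bij_betwE[OF f] ijS by auto
      ultimately have "{f i, f j} \<in> edges ?K" by (simp add: complete_edge)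
      then show "e \<in> edges S" using fe ijS ij(1) by blast
    qed
    then have "edges S = edges ?K" using subgraphD(3)[OF s] by blast
    then have "S = ?K" using v by (intro graph_eqI) simp_all
    then show "S \<in> {?K}" by simp
  next
    fix S assume "S \<in> {?K}"
    then have "S = ?K" by simp
    moreover have "subgraph ?K ?K" by (rule subgraphI[OF wf_complete]) simp_all
    ultimately show "S \<in> {S. subgraph S ?K \<and> iso S ?K}" using iso_refl by simp
  qed
  then show ?thesis unfolding kcount_def count_sub_def by simp
qed

lemma turan_no_clique:
  assumes w: "\<omega> \<ge> 1"
  shows "count_sub (complete_graph (\<omega> + 1)) (turan_graph \<omega> n) = 0"
proof -
  let ?K = "complete_graph (\<omega> + 1)"
  have "{S. subgraph S (turan_graph \<omega> n) \<and> iso S ?K} = {}"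
  proof (rule equals0I)
    fix S assume "S \<in> {S. subgraph S (turan_graph \<omega> n) \<and> iso S ?K}"
    then have s: "subgraph S (turan_graph \<omega> n)" and iso: "iso S ?K" by simp_all
    obtain f where f: "bij_betw f (verts S) (verts ?K)" and fe: "\<forall>x\<in>verts S. \<forall>y\<in>verts S. {x, y} \<in> edges S \<longleftrightarrow> {f x, f y} \<in> edges ?K"
      using iso unfolding iso_def by (elim exE conjE)
    have inj: "inj_on f (verts S)" using f by (simp add: bij_betw_def)
    have fin: "finite (verts S)" using wf_fin[OF subgraphD(1)[OF s]] .
    have im: "inj_on (\<lambda>x. x mod \<omega>) (verts S)"
    proof (rule inj_onI, rule ccontr)
      fix x y assume xy: "x \<in> verts S" "y \<in> verts S" "x mod \<omega> = y mod \<omega>" "x \<noteq> y"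
      have "f x \<noteq> f y" using inj_on_contraD[OF inj xy(4) xy(1,2)] .
      moreover have "f x < \<omega> + 1" "f y < \<omega> + 1" using bij_betwE[OF f] xy(1,2) by auto
      ultimately have "{f x, f y} \<in> edges ?K" by (simp add: complete_edge)
      then have "{x, y} \<in> edges S" using bspec[OF bspec[OF fe xy(1)] xy(2)] by simp
      then have "{x, y} \<in> edges (turan_graph \<omega> n)" using subgraphD(3)[OF s] by (rule rev_subsetD)
      from turan_edge[OF this] xy(3) show False by simp
    qed
    have "(\<lambda>x. x mod \<omega>) ` verts S \<subseteq> {0..<\<omega>}" using w by auto
    then have "card (verts S) \<le> card {0..<\<omega>}" by (rule card_inj_on_le[OF im _ finite_atLeastLessThan])
    moreover have "card (verts S) = \<omega> + 1" using bij_betw_same_card[OF f] by simp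
    ultimately show False by simp
  qed
  then show ?thesis unfolding count_sub_def by (simp only: card.empty)
qed

lemma turan_no_split:
  fixes u \<Delta> \<omega> :: nat
  assumes wu: "\<omega> \<ge> u + 1" and u1: "u \<ge> 1"
  defines "q \<equiv> \<Delta> div (\<omega> - u)"
  defines "n \<equiv> \<Delta> + u * q"
  shows "count_sub (split_graph u \<Delta>) (turan_graph \<omega> n) = 0"
proof -
  let ?F = "split_graph u \<Delta>" and ?T = "turan_graph \<omega> n"
  let ?N = "u + \<Delta> + 1"
  have wpos: "\<omega> > 0" using wu by simp
  have "{S. subgraph S ?T \<and> iso S ?F} = {}"
  proof (rule equals0I)
    fix S assume "S \<in> {S. subgraph S ?T \<and> iso S ?F}"
    then have s: "subgraph S ?T" and iso: "iso S ?F" by simp_all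
    obtain f where f: "bij_betw f (verts S) (verts ?F)" and fe: "\<forall>x\<in>verts S. \<forall>y\<in>verts S. {x, y} \<in> edges S \<longleftrightarrow> {f x, f y} \<in> edges ?F"
      using iso unfolding iso_def by (elim exE conjE)
    let ?g = "inv_into (verts S) f"
    have g: "bij_betw ?g {0..<?N} (verts S)" using bij_betw_inv_into[OF f] by simp
    have ginj: "inj_on ?g {0..<?N}" using g by (simp add: bij_betw_def)
    have fg: "f (?g i) = i" if "i < ?N" for i
      using f that by (simp add: bij_betw_def f_inv_into_f)
    have gS: "?g i \<in> verts S" if "i < ?N" for i using bij_betwE[OF g] that by simp
    have gn: "?g i < n" if "i < ?N" for i using subgraphD(2)[OF s] gS[OF that] by auto
    have adj: "?g i mod \<omega> \<noteq> ?g j mod \<omega>" if "i < ?N" "j < ?N" "i \<noteq> j" "i < u" for i j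
    proof -
      have "{i, j} \<in> edges ?F" using split_edge that by simp
      then have "{f (?g i), f (?g j)} \<in> edges ?F" using fg that(1,2) by simp
      then have "{?g i, ?g j} \<in> edges S" using bspec[OF bspec[OF fe gS[OF that(1)]] gS[OF that(2)]] by simp
      then have "{?g i, ?g j} \<in> edges ?T" using subgraphD(3)[OF s] by (rule rev_subsetD)
      then show ?thesis by (rule turan_edge)
    qed
    define R where "R = (\<lambda>i. ?g i mod \<omega>) ` {0..<u}"
    have Rinj: "inj_on (\<lambda>i. ?g i mod \<omega>) {0..<u}"
    proof (rule inj_onI, rule ccontr)
      fix i j assume ij: "i \<in> {0..<u}" "j \<in> {0..<u}" "?g i mod \<omega> = ?g j mod \<omega>" "i \<noteq> j"
      have "?g i mod \<omega> \<noteq> ?g j mod \<omega>" using adj[of i j] ij by simp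
      then show False using ij(3) by simp
    qed
    have cR: "card R = u" unfolding R_def using card_image[OF Rinj] by simp
    have Rw: "R \<subseteq> {0..<\<omega>}" unfolding R_def using wpos by auto
    define Tt where "Tt = ?g ` {u..<?N}"
    have cT: "card Tt = \<Delta> + 1"
    proof -
      have "inj_on ?g {u..<?N}" using ginj by (rule inj_on_subset) auto
      then show ?thesis unfolding Tt_def using card_image by fastforce
    qed
    define A where "A = {x. x < n \<and> x mod \<omega> \<notin> R}"
    define B where "B = {x. x < n \<and> x mod \<omega> \<in> R}"
    have TA: "Tt \<subseteq> A"
    proof
      fix x assume "x \<in> Tt"
      then obtain j where j: "u \<le> j" "j < ?N" "x = ?g j" unfolding Tt_def by auto
      have "x mod \<omega> \<notin> R"
      proof
        assume "x mod \<omega> \<in> R"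
        then obtain i where i: "i < u" "x mod \<omega> = ?g i mod \<omega>" unfolding R_def by auto
        have "?g i mod \<omega> \<noteq> ?g j mod \<omega>" using adj[of i j] i j by simp
        then show False using i j by simp
      qed
      moreover have "x < n" using gn j by simp
      ultimately show "x \<in> A" unfolding A_def by simp
    qed
    have finA: "finite A" unfolding A_def by simp
    have finB: "finite B" unfolding B_def by simp
    have AB: "A \<union> B = {0..<n}" "A \<inter> B = {}" unfolding A_def B_def by auto
    have cAB: "card A + card B = n" using card_Un_disjoint[OF finA finB AB(2)] AB(1) by simp
    define P where "P = (\<lambda>(r,j). r + \<omega> * j) ` (R \<times> {0..<q})"
    have wq: "\<omega> * q \<le> n"
    proof -
      have "(\<omega> - u) * q \<le> \<Delta>" unfolding q_def by (rule times_div_less_eq_dividend)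
      moreover have "\<omega> * q = (\<omega> - u) * q + u * q" using wu by (simp add: add_mult_distrib[symmetric])
      ultimately show ?thesis unfolding n_def by simp
    qed
    have PB: "P \<subseteq> B"
    proof
      fix x assume "x \<in> P"
      then obtain r j where rj: "r \<in> R" "j < q" "x = r + \<omega> * j" unfolding P_def by auto
      have rw: "r < \<omega>" using Rw rj(1) by auto
      have "x mod \<omega> = r" using rj(3) rw by simp
      moreover have "x < n"
      proof -
        have "r + \<omega> * j < \<omega> + \<omega> * j" using rw by simp
        also have "\<dots> = \<omega> * (j + 1)" by simp
        also have "\<dots> \<le> \<omega> * q" using rj(2) by (intro mult_le_mono2) simp
        finally show ?thesis using rj(3) wq by simp
      qed
      ultimately show "x \<in> B" unfolding B_def using rj(1) by simp
    qed
    have cP: "card P = u * q"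
    proof -
      have "inj_on (\<lambda>(r,j). r + \<omega> * j) (R \<times> {0..<q})"
      proof (rule inj_onI, clarify)
        fix r j r' j' assume a: "r \<in> R" "r' \<in> R" "r + \<omega> * j = r' + \<omega> * j'"
        have rw: "r < \<omega>" "r' < \<omega>" using Rw a(1,2) by auto
        have "(r + \<omega> * j) mod \<omega> = (r' + \<omega> * j') mod \<omega>" using a(3) by simp
        then have rr: "r = r'" using rw by simp
        then have "\<omega> * j = \<omega> * j'" using a(3) by simp
        then show "r = r' \<and> j = j'" using rr wpos by simp
      qed
      then have "card P = card (R \<times> {0..<q})" unfolding P_def by (rule card_image)
      then show ?thesis using cR by (simp add: card_cartesian_product)
    qed
    have "u * q \<le> card B" using card_mono[OF finB PB] cP by simp
    then have "card A \<le> \<Delta>" using cAB unfolding n_def by simp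
    moreover have "\<Delta> + 1 \<le> card A" using card_mono[OF finA TA] cT by simp
    ultimately show False by simp
  qed
  then show ?thesis unfolding count_sub_def by (simp only: card.empty)
qed



lemma sum_if_split: "(\<Sum>k<a+r. if k < a then c else (1::nat)) = a * c + r"
  by (induction r) auto

theorem mainTheorem9:
  fixes \<Delta> \<omega> u p :: nat and H :: "'b graph"
  assumes "\<Delta> \<ge> \<omega>" and "\<omega> \<ge> u + 1" and "u + 1 \<ge> 2" and "p \<ge> 1"
    and "wf_graph H" and "kcount u H \<ge> 1"
  shows "let L = turan_graph \<omega> (\<Delta> + u * (\<Delta> div (\<omega> - u)))
         in enat (count_sub H (copies (p div kcount u L) L))
            \<le> ex_u u p H {split_graph u \<Delta>, complete_graph (\<omega> + 1)}"
proof -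
  define n where "n = \<Delta> + u * (\<Delta> div (\<omega> - u))"
  define L where "L = turan_graph \<omega> n"
  define kL where "kL = kcount u L"
  define a where "a = p div kL"
  define r where "r = p mod kL"
  define comp where "comp k = (if k < a then L else complete_graph u)" for k
  define gm where "gm k = gmap (Pair k) (comp k)" for k
  define I where "I = {..<a+r}"
  define G' where "G' = gunion I gm"
  define Gn where "Gn = gmap prod_encode G'"
  have u1: "u \<ge> 1" using assms(3) by simp
  have w1: "\<omega> \<ge> 1" using assms(2) by simp
  have wc: "wf_graph (comp k)" for k unfolding comp_def L_def using wf_turan wf_complete by simp
  have ip: "inj_on (Pair k) X" for k :: nat and X :: "nat set" by (simp add: inj_on_def)
  have wgm: "wf_graph (gm k)" for k unfolding gm_def by (rule wf_gmap[OF ip wc])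
  have fI: "finite I" unfolding I_def by simp
  have dis: "\<forall>k\<in>I. \<forall>j\<in>I. k \<noteq> j \<longrightarrow> verts (gm k) \<inter> verts (gm j) = {}"
    unfolding gm_def by auto
  have wG': "wf_graph G'" unfolding G'_def by (rule wf_gunion[OF fI]) (simp add: wgm)
  have cnt: "count_sub F G' = (\<Sum>k\<in>I. count_sub F (comp k))" if "has_univ F" for F :: "nat graph"
  proof -
    have "count_sub F G' = (\<Sum>k\<in>I. count_sub F (gm k))"
      unfolding G'_def by (rule count_union[OF fI _ dis that]) (simp add: wgm)
    also have "\<dots> = (\<Sum>k\<in>I. count_sub F (comp k))"
      unfolding gm_def by (rule sum.cong[OF refl], rule count_gmap[OF ip wc])
    finally show ?thesis .
  qed
  have kG': "kcount u G' = p"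
  proof -
    have "kcount u G' = (\<Sum>k\<in>I. count_sub (complete_graph u) (comp k))"
      unfolding kcount_def by (rule cnt[OF univ_complete[OF u1]])
    also have "\<dots> = (\<Sum>k<a+r. if k < a then kL else 1)"
      unfolding I_def comp_def kL_def
      by (rule sum.cong[OF refl]) (simp add: kcount_complete[unfolded kcount_def] kcount_def)
    also have "\<dots> = a * kL + r" by (rule sum_if_split)
    also have "\<dots> = p" unfolding a_def r_def by simp
    finally show ?thesis .
  qed
  have f1: "count_sub (split_graph u \<Delta>) G' = 0"
  proof -
    have "count_sub (split_graph u \<Delta>) (comp k) = 0" for k
    proof (cases "k < a")
      case True
      then show ?thesis unfolding comp_def L_def n_def using turan_no_split[OF assms(2) u1] by simp
    next
      case False
      then show ?thesis unfolding comp_def by (simp add: count_zero_card)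
    qed
    then show ?thesis using cnt[OF univ_split[OF u1]] by simp
  qed
  have f2: "count_sub (complete_graph (\<omega> + 1)) G' = 0"
  proof -
    have "count_sub (complete_graph (\<omega> + 1)) (comp k) = 0" for k
    proof (cases "k < a")
      case True
      then show ?thesis unfolding comp_def L_def using turan_no_clique[OF w1] by simp
    next
      case False
      then show ?thesis unfolding comp_def using assms(2) by (simp add: count_zero_card)
    qed
    then show ?thesis using cnt[OF univ_complete] by simp
  qed
  have sub: "count_sub H (copies a L) \<le> count_sub H G'"
  proof (rule count_mono[OF wG'])
    show "verts (copies a L) \<subseteq> verts G'"
    proof
      fix z assume "z \<in> verts (copies a L)"
      then obtain k x where z: "z = (k, x)" "k < a" "x \<in> verts L" unfolding copies_def by auto
      then have "z \<in> verts (gm k)" unfolding gm_def comp_def by simp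
      moreover have "k \<in> I" unfolding I_def using z(2) by simp
      ultimately show "z \<in> verts G'" unfolding G'_def gunion_def by auto
    qed
    show "edges (copies a L) \<subseteq> edges G'"
    proof
      fix e assume "e \<in> edges (copies a L)"
      then obtain k x y where e: "e = {(k, x), (k, y)}" "k < a" "{x, y} \<in> edges L"
        unfolding copies_def edges_pair by blast
      have "Pair k ` {x, y} \<in> (\<lambda>e. Pair k ` e) ` edges L" using e(3) by (rule imageI)
      then have "e \<in> edges (gm k)" unfolding gm_def comp_def using e(1,2) by simp
      moreover have "k \<in> I" unfolding I_def using e(2) by simp
      ultimately show "e \<in> edges G'" unfolding G'_def gunion_def by auto
    qed
  qed
  have ie: "inj_on prod_encode (verts G')" by (rule inj_prod_encode)
  have wGn: "wf_graph Gn" unfolding Gn_def by (rule wf_gmap[OF ie wG'])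
  note cGn = count_gmap[OF ie wG', folded Gn_def]
  have mem: "enat (count_sub H Gn) \<in> {enat (count_sub H G) | G :: nat graph.
      wf_graph G \<and> kcount u G = p \<and> (\<forall>F0\<in>{split_graph u \<Delta>, complete_graph (\<omega> + 1)}. count_sub F0 G = 0)}"
  proof -
    have kGn: "kcount u Gn = p" using kG' unfolding kcount_def Gn_def count_gmap[OF ie wG'] .
    have fGn: "\<forall>F0\<in>{split_graph u \<Delta>, complete_graph (\<omega> + 1)}. count_sub F0 Gn = 0"
      unfolding Gn_def count_gmap[OF ie wG'] using f1 f2 by simp
    show ?thesis by (rule CollectI, rule exI[of _ Gn]) (use wGn kGn fGn in simp)
  qed
  have "enat (count_sub H (copies a L)) \<le> enat (count_sub H Gn)"
    unfolding Gn_def count_gmap[OF ie wG'] using sub by simp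
  also have "\<dots> \<le> ex_u u p H {split_graph u \<Delta>, complete_graph (\<omega> + 1)}"
    unfolding ex_u_def by (rule Sup_upper[OF mem])
  finally have key: "enat (count_sub H (copies a L)) \<le> ex_u u p H {split_graph u \<Delta>, complete_graph (\<omega> + 1)}" .
  show ?thesis using key unfolding a_def kL_def L_def n_def Let_def .
qed

end
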